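(* Let $(x_k)_{k\ge0}$ be an arbitrary sequence of numbers (or indeterminates), and define $a_n=x_n$ if $n=2^k-1$ for some integer $k\ge0$ and $a_n=0$ otherwise. Let $d(n)=\det\left(a_{i+j}\right)_{i,j=0}^{n-1}$ with $d(0)=1$, and for $n\ge1$ let $\alpha(n)=2^{\lceil\log_2 n\rceil}-1$ and $\beta(n)=2n-1-\alpha(n)$. Then for all $n\ge1$, $$d(n)=(-1)^{\binom{\beta(n)}{2}}x_{\alpha(n)}^{\beta(n)}\,d(n-\beta(n)).$$ *)

theory Defs
  imports Complex_Main "Jordan_Normal_Form.Determinant"
begin

definition seq_a :: "(nat \<Rightarrow> 'a::comm_ring_1) \<Rightarrow> nat \<Rightarrow> 'a" where
  "seq_a x n = (if \<exists>k::nat. n = 2 ^ k - 1 then x n else 0)"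

definition hankel_d :: "(nat \<Rightarrow> 'a::comm_ring_1) \<Rightarrow> nat \<Rightarrow> 'a" where
  "hankel_d x n = (if n = 0 then 1 else det (mat n n (\<lambda>(i, j). seq_a x (i + j))))"

definition alpha :: "nat \<Rightarrow> nat" where
  "alpha n = 2 ^ nat \<lceil>log 2 (real n)\<rceil> - 1"

definition beta :: "nat \<Rightarrow> nat" where
  "beta n = 2 * n - 1 - alpha n"

end

theory Submission
  imports Defs
begin


definition rv :: "nat \<Rightarrow> nat \<Rightarrow> nat \<Rightarrow> nat" where
  "rv a k i = (if a \<le> i \<and> i < a + k then 2*a + k - 1 - i else i)"

lemma rv_small: "k \<le> 1 \<Longrightarrow> rv a k = id"
  by (auto simp: rv_def fun_eq_iff)

lemma rv_step: "rv a (k+2) = Transposition.transpose a (a+k+1) \<circ> rv (a+1) k"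
  by (auto simp: rv_def fun_eq_iff Transposition.transpose_def)

lemma rv_perm: "rv a k permutes {a..<a+k}"
proof (induction k arbitrary: a rule: less_induct)
  case (less k)
  show ?case
  proof (cases "k \<le> 1")
    case True then show ?thesis using permutes_id by (simp add: rv_small id_def)
  next
    case False
    then obtain l where l: "k = l + 2" by (metis add.commute le_add_diff_inverse2 not_less_eq_eq one_add_one plus_1_eq_Suc)
    have "rv (a+1) l permutes {a..<a+k}"
      by (rule permutes_subset[OF less.IH[of l "a+1"]]) (use l in auto)
    moreover have "Transposition.transpose a (a+l+1) permutes {a..<a+k}"
      by (rule permutes_swap_id) (use l in auto)
    ultimately show ?thesis unfolding l rv_step by (rule permutes_compose)
  qed
qed

lemma rv_sign: "sign (rv a k) = (-1) ^ (k choose 2)"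
proof (induction k arbitrary: a rule: less_induct)
  case (less k)
  show ?case
  proof (cases "k \<le> 1")
    case True then show ?thesis using rv_small[OF True]
      by (cases k) (auto simp: sign_id choose_two)
  next
    case False
    then obtain l where l: "k = l + 2" by (metis add.commute le_add_diff_inverse2 not_less_eq_eq one_add_one plus_1_eq_Suc)
    have p1: "permutation (rv (a+1) l)" using rv_perm permutation_permutes by blast
    have "sign (rv a k) = - sign (rv (a+1) l)"
      unfolding l rv_step sign_compose[OF permutation_swap_id p1] by (simp add: sign_swap_id)
    also have "\<dots> = - ((-1) ^ (l choose 2))" using less.IH[of l] l by simp
    also have "\<dots> = (-1) ^ (k choose 2)"
    proof -
      have "k choose 2 = (l choose 2) + 2*l + 1" unfolding l
        by (simp add: choose_two numeral_2_eq_2)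
      then show ?thesis by (simp add: power_add power_mult)
    qed
    finally show ?thesis .
  qed
qed

lemma forced:
  fixes f :: "nat \<Rightarrow> nat \<Rightarrow> 'a::comm_ring_1"
  assumes c: "c + 1 = N + n" and h: "2*h \<le> c+1" "N \<le> h"
  and R: "\<And>i j. i<n \<Longrightarrow> j<n \<Longrightarrow> h \<le> i \<Longrightarrow> f i j = (if i + j = c then v else 0)"
  and C: "\<And>i j. i<n \<Longrightarrow> j<n \<Longrightarrow> h \<le> j \<Longrightarrow> f i j = (if i + j = c then v else 0)"
  and p: "p permutes {0..<n}" and nz: "\<forall>i<n. f i (p i) \<noteq> 0"
  and i: "N \<le> i" "i < n"
  shows "p i = c - i"
proof (cases "h \<le> i")
  case True
  have "p i < n" using p i by (auto dest: permutes_in_image)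
  then have "f i (p i) = (if i + p i = c then v else 0)" using R True i by auto
  with nz i show ?thesis by (auto split: if_splits)
next
  case False
  define j where "j = c - i"
  have jh: "h \<le> j" "j < n" using False h c i unfolding j_def by auto
  define k where "k = inv_into UNIV p j"
  have pk: "p k = j" unfolding k_def using p jh by (meson permutes_inverses(1))
  have kn: "k < n" unfolding k_def using p jh
    by (meson atLeastLessThan_iff permutes_in_image permutes_inv zero_le)
  have "f k j = (if k + j = c then v else 0)" using C kn jh by auto
  with nz kn pk have "k + j = c" by (auto split: if_splits)
  then have "k = i" using j_def i c jh by auto
  then show ?thesis using pk j_def by simp
qed

lemma det_block:
  fixes f :: "nat \<Rightarrow> nat \<Rightarrow> 'a::comm_ring_1"
  assumes Nn: "N \<le> n" and c: "c + 1 = N + n" and h: "2*h \<le> c+1" "N \<le> h"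
  and R: "\<And>i j. i<n \<Longrightarrow> j<n \<Longrightarrow> h \<le> i \<Longrightarrow> f i j = (if i + j = c then v else 0)"
  and C: "\<And>i j. i<n \<Longrightarrow> j<n \<Longrightarrow> h \<le> j \<Longrightarrow> f i j = (if i + j = c then v else 0)"
  shows "det (mat n n (\<lambda>(i,j). f i j))
    = (-1)^((n-N) choose 2) * v^(n-N) * det (mat N N (\<lambda>(i,j). f i j))"
proof -
  define \<rho> where "\<rho> = rv N (n-N)"
  have \<rho>: "\<And>i. \<rho> i = (if N \<le> i \<and> i < n then c - i else i)"
    unfolding \<rho>_def rv_def using c Nn by auto
  have \<rho>\<rho>: "\<rho> \<circ> \<rho> = id" using c by (auto simp: fun_eq_iff \<rho>)
  have \<rho>perm: "\<rho> permutes {0..<n}" unfolding \<rho>_def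
    by (rule permutes_subset[OF rv_perm]) (use Nn in auto)
  have \<rho>sign: "sign \<rho> = (-1)^((n-N) choose 2)" unfolding \<rho>_def by (rule rv_sign)
  define g where "g p = (signof p :: 'a) * (\<Prod>i = 0..<n. f i (p i))" for p
  define P where "P = {p. p permutes {0..<n}}"
  define P' where "P' = {p. p permutes {0..<n} \<and> (\<forall>i\<in>{N..<n}. p i = c - i)}"
  define Q where "Q = {q. q permutes {0..<N}}"
  have "det (mat n n (\<lambda>(i,j). f i j)) = sum g P"
    unfolding det_def'[of _ n, OF mat_carrier] P_def g_def
    by (intro sum.cong refl arg_cong2[where f="(*)"] prod.cong)
       (auto dest: permutes_in_image)
  also have "\<dots> = sum g P'"
  proof (rule sum.mono_neutral_right)
    show "finite P" unfolding P_def by (simp add: finite_permutations)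
    show "P' \<subseteq> P" unfolding P_def P'_def by auto
    show "\<forall>p\<in>P - P'. g p = 0"
    proof
      fix p assume pP: "p \<in> P - P'"
      show "g p = 0"
      proof (rule ccontr)
        assume "g p \<noteq> 0"
        then have "(\<Prod>i = 0..<n. f i (p i)) \<noteq> 0" unfolding g_def by auto
        then have nz: "\<forall>i<n. f i (p i) \<noteq> 0"
          by (metis atLeastLessThan_iff finite_atLeastLessThan prod_zero zero_le)
        have "\<forall>i\<in>{N..<n}. p i = c - i"
          using forced[OF c h R C _ nz] pP unfolding P_def by auto
        with pP show False unfolding P_def P'_def by auto
      qed
    qed
  qed
  also have "\<dots> = sum (\<lambda>q. g (q \<circ> \<rho>)) Q"
  proof (rule sum.reindex_bij_betw[symmetric])
    show "bij_betw (\<lambda>q. q \<circ> \<rho>) Q P'"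
    proof (rule bij_betw_byWitness[where f'="\<lambda>q. q \<circ> \<rho>"])
      show "\<forall>a\<in>Q. a \<circ> \<rho> \<circ> \<rho> = a" using \<rho>\<rho> by (simp add: comp_assoc)
      show "\<forall>a\<in>P'. a \<circ> \<rho> \<circ> \<rho> = a" using \<rho>\<rho> by (simp add: comp_assoc)
      show "(\<lambda>q. q \<circ> \<rho>) ` Q \<subseteq> P'"
      proof
        fix p assume "p \<in> (\<lambda>q. q \<circ> \<rho>) ` Q"
        then obtain q where q: "q permutes {0..<N}" and pq: "p = q \<circ> \<rho>" unfolding Q_def by auto
        have "q permutes {0..<n}" by (rule permutes_subset[OF q]) (use Nn in auto)
        then have "p permutes {0..<n}" unfolding pq by (rule permutes_compose[OF \<rho>perm])
        moreover have "\<forall>i\<in>{N..<n}. p i = c - i"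
        proof
          fix i assume i: "i \<in> {N..<n}"
          then have "\<rho> i = c - i" "c - i \<notin> {0..<N}" using \<rho> c by auto
          then show "p i = c - i" unfolding pq using permutes_not_in[OF q] by simp
        qed
        ultimately show "p \<in> P'" unfolding P'_def by auto
      qed
      show "(\<lambda>q. q \<circ> \<rho>) ` P' \<subseteq> Q"
      proof
        fix q assume "q \<in> (\<lambda>q. q \<circ> \<rho>) ` P'"
        then obtain p where p: "p \<in> P'" and qp: "q = p \<circ> \<rho>" by auto
        have "q permutes {0..<n}" unfolding qp using \<rho>perm p unfolding P'_def
          by (intro permutes_compose) auto
        then have "q permutes {0..<N}"
        proof (rule permutes_superset)
          fix x assume x: "x \<in> {0..<n} - {0..<N}"
          then have "\<rho> x = c - x" "c - x \<in> {N..<n}" using \<rho> c by auto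
          then show "q x = x" unfolding qp using p x c unfolding P'_def by auto
        qed
        then show "q \<in> Q" unfolding Q_def by auto
      qed
    qed
  qed
  also have "\<dots> = sum (\<lambda>q. (signof \<rho> * v^(n-N)) * (signof q * (\<Prod>i = 0..<N. f i (q i)))) Q"
  proof (rule sum.cong[OF refl])
    fix q assume "q \<in> Q"
    then have q: "q permutes {0..<N}" unfolding Q_def by auto
    have sq: "sign (q \<circ> \<rho>) = sign q * sign \<rho>"
      by (rule sign_compose) (use q \<rho>perm permutation_permutes in blast)+
    have "(\<Prod>i = 0..<n. f i ((q \<circ> \<rho>) i))
        = (\<Prod>i = 0..<N. f i ((q \<circ> \<rho>) i)) * (\<Prod>i = N..<n. f i ((q \<circ> \<rho>) i))"
      using Nn by (simp add: prod.atLeastLessThan_concat)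
    also have "(\<Prod>i = 0..<N. f i ((q \<circ> \<rho>) i)) = (\<Prod>i = 0..<N. f i (q i))"
      by (rule prod.cong) (auto simp: \<rho>)
    also have "(\<Prod>i = N..<n. f i ((q \<circ> \<rho>) i)) = (\<Prod>i = N..<n. v)"
    proof (rule prod.cong[OF refl])
      fix i assume i: "i \<in> {N..<n}"
      then have r: "\<rho> i = c - i" "c - i \<notin> {0..<N}" using \<rho> c by auto
      then have qi: "(q \<circ> \<rho>) i = c - i" using permutes_not_in[OF q] by simp
      have "c - i < n" "i + (c - i) = c" using i c by auto
      moreover have "h \<le> i \<or> h \<le> c - i" using h by auto
      ultimately show "f i ((q \<circ> \<rho>) i) = v" unfolding qi using R C i by auto
    qed
    also have "(\<Prod>i = N..<n. v) = v^(n-N)" by simp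
    finally show "g (q \<circ> \<rho>) = (signof \<rho> * v^(n-N)) * (signof q * (\<Prod>i = 0..<N. f i (q i)))"
      unfolding g_def sq by (simp add: algebra_simps)
  qed
  also have "\<dots> = (signof \<rho> * v^(n-N)) * det (mat N N (\<lambda>(i,j). f i j))"
    unfolding sum_distrib_left[symmetric] det_def'[of _ N, OF mat_carrier] Q_def
    by (intro arg_cong2[where f="(*)"] refl sum.cong prod.cong arg_cong2[where f="(*)"])
       (auto dest: permutes_in_image)
  finally show ?thesis using \<rho>sign by simp
qed

lemma det_mat0: "det (mat 0 0 f) = 1"
  unfolding det_def by simp

lemma pow_key:
  fixes m n s k :: nat
  assumes "2^m < 2*n" "n \<le> 2^m" "2^m div 2 \<le> s" "s + 2 \<le> 2*n" "s = 2^k - 1"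
  shows "k = m"
proof (rule ccontr)
  assume "k \<noteq> m"
  then consider "k < m" | "m < k" by linarith
  then show False
  proof cases
    case 1
    then have "(2::nat)^(Suc k) \<le> 2^m" by (intro power_increasing) auto
    then have "2^k \<le> (2::nat)^m div 2" by simp
    moreover have "(2::nat)^k > 0" by simp
    ultimately show False using assms(3,5) by linarith
  next
    case 2
    then have "(2::nat)^(Suc m) \<le> 2^k" by (intro power_increasing) auto
    then have "2 * (2::nat)^m \<le> 2^k" by simp
    then show False using assms by linarith
  qed
qed

lemma log_facts:
  fixes n :: nat
  assumes "n \<ge> 1"
  shows "n \<le> 2 ^ nat \<lceil>log 2 (real n)\<rceil>" "2 ^ nat \<lceil>log 2 (real n)\<rceil> < 2 * n"
proof -
  define m where "m = nat \<lceil>log 2 (real n)\<rceil>"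
  have l0: "log 2 (real n) \<ge> 0" using assms by simp
  have m: "real m = of_int \<lceil>log 2 (real n)\<rceil>" unfolding m_def using l0 by simp
  have "log 2 (real n) \<le> real m" using m by linarith
  then have "real n \<le> 2 powr real m" using assms
    by (subst (asm) log_le_iff) auto
  then have "real n \<le> 2 ^ m" by (simp add: powr_realpow)
  then show "n \<le> 2 ^ nat \<lceil>log 2 (real n)\<rceil>" unfolding m_def[symmetric] using of_nat_le_iff[of n "2^m", where 'a=real] by simp
  have "real m - 1 < log 2 (real n)" using m by linarith
  then have "2 powr (real m - 1) < real n" using assms
    by (simp add: less_log_iff)
  then have "2 powr real m < 2 * real n" by (simp add: powr_diff)
  then have "real (2 ^ m) < real (2 * n)" by (simp add: powr_realpow)
  then show "2 ^ nat \<lceil>log 2 (real n)\<rceil> < 2 * n" unfolding m_def[symmetric] by linarith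
qed

theorem theorem4p1:
  fixes x :: "nat \<Rightarrow> 'a::comm_ring_1" and n :: nat
  assumes "n \<ge> 1"
  shows "hankel_d x n
    = (-1) ^ (beta n choose 2) * x (alpha n) ^ beta n * hankel_d x (n - beta n)"
proof -
  define m where "m = nat \<lceil>log 2 (real n)\<rceil>"
  have m1: "n \<le> 2^m" and m2: "2^m < 2*n" using log_facts[OF assms] unfolding m_def by auto
  have pos: "(2::nat)^m \<ge> 1" by simp
  have al: "alpha n = 2^m - 1" unfolding alpha_def m_def ..
  have be: "beta n = 2*n - 2^m" unfolding beta_def al using m2
    using m2 pos by linarith
  define N where "N = 2^m - n"
  have nb: "n - beta n = N" unfolding be N_def using m1 m2 by linarith
  have nN: "n - N = beta n" unfolding be N_def using m1 m2 by linarith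
  define c where "c = (2::nat)^m - 1"
  define h where "h = (2::nat)^m div 2"
  have key: "seq_a x s = (if s = c then x c else 0)" if "h \<le> s" "s + 2 \<le> 2*n" for s
  proof (cases "s = c")
    case True then show ?thesis unfolding seq_a_def c_def by auto
  next
    case False
    have "\<not> (\<exists>k. s = 2^k - 1)"
    proof
      assume "\<exists>k. s = 2^k - 1"
      then obtain k where k: "s = 2^k - 1" by auto
      have "k = m" by (rule pow_key[OF m2 m1 _ that(2) k]) (use that h_def in auto)
      then show False using False k c_def by simp
    qed
    then show ?thesis unfolding seq_a_def using False by auto
  qed
  have "det (mat n n (\<lambda>(i,j). seq_a x (i+j)))
      = (-1)^((n-N) choose 2) * (x c)^(n-N) * det (mat N N (\<lambda>(i,j). seq_a x (i+j)))"
  proof (rule det_block)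
    show "N \<le> n" "c + 1 = N + n" "2*h \<le> c+1" "N \<le> h"
      unfolding N_def c_def h_def using m1 m2 pos by auto
    show "seq_a x (i + j) = (if i + j = c then x c else 0)" if "i<n" "j<n" "h \<le> i" for i j
      using key[of "i+j"] that by auto
    show "seq_a x (i + j) = (if i + j = c then x c else 0)" if "i<n" "j<n" "h \<le> j" for i j
      using key[of "i+j"] that by auto
  qed
  moreover have "hankel_d x N = det (mat N N (\<lambda>(i,j). seq_a x (i+j)))"
    unfolding hankel_d_def by (simp add: det_mat0)
  moreover have "hankel_d x n = det (mat n n (\<lambda>(i,j). seq_a x (i+j)))"
    unfolding hankel_d_def using assms by simp
  ultimately show ?thesis unfolding nb nN al c_def by simp
qed

end
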